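(* Let $x_s<x_t$ be integers, let $C\ge 0$, and let $f:[x_s,x_t]\to\mathbb{R}$ be such that $([x_s,x_t],f)$ is an Ameso($C$) pair. Suppose there exist $x^0\in[x_s,x_t]$ and a positive integer $b$ with $[x^0-b,x^0]\subseteq[x_s,x_t]$ such that $f(x^0)=\min_{y\in[x^0-b,x_t]}f(y)$ and $f(x^0)+C\le \max_{y\in[x^0-b,x^0]}f(y)$. Then $f(x^0)=\min_{y\in[x_s,x_t]}f(y)$.
   Context: For integers $a\le b$, $[a,b]$ denotes the set of integers $\{a,a+1,\dots,b\}$. Floors and ceilings of vectors are taken componentwise. A set $D^n\subseteq\mathbb{Z}^n$ is an Ameso set if $\lceil(\vec x+\vec y)/2\rceil,\lfloor(\vec x+\vec y)/2\rfloor\in D^n$ for all $\vec x,\vec y\in D^n$. For $C\ge 0$, $(D^n,f)$ is an Ameso($C$) pair if $D^n$ is an Ameso set, $f:D^n\to\mathbb{R}$ is bounded below, and $f(\vec x)+f(\vec y)+C\ge f(\lceil(\vec x+\vec y)/2\rceil)+f(\lfloor(\vec x+\vec y)/2\rfloor)$ for all $\vec x,\vec y\in D^n$. *)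

theory Defs
  imports Complex_Main
begin

definition ameso_set :: "int set \<Rightarrow> bool" where
  "ameso_set D \<longleftrightarrow> (\<forall>x\<in>D. \<forall>y\<in>D.
     \<lceil>real_of_int (x + y) / 2\<rceil> \<in> D \<and> \<lfloor>real_of_int (x + y) / 2\<rfloor> \<in> D)"

definition ameso_pair :: "int set \<Rightarrow> (int \<Rightarrow> real) \<Rightarrow> real \<Rightarrow> bool" where
  "ameso_pair D f C \<longleftrightarrow> ameso_set D \<and> bdd_below (f ` D) \<and>
     (\<forall>x\<in>D. \<forall>y\<in>D. f x + f y + C \<ge>
        f \<lceil>real_of_int (x + y) / 2\<rceil> + f \<lfloor>real_of_int (x + y) / 2\<rfloor>)"

end

theory Submission
  imports Defs
begin

lemma mid_eq:
  fixes x y q :: int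
  assumes "x + y = 2 * q"
  shows "\<lceil>real_of_int (x + y) / 2\<rceil> = q" "\<lfloor>real_of_int (x + y) / 2\<rfloor> = q"
proof -
  have "real_of_int (x + y) / 2 = real_of_int q" using assms by simp
  then show "\<lceil>real_of_int (x + y) / 2\<rceil> = q" "\<lfloor>real_of_int (x + y) / 2\<rfloor> = q" by simp_all
qed

lemma keyB:
  fixes f :: "int \<Rightarrow> real" and a c p :: int and v C :: real
  assumes am: "\<And>x y. x \<in> {a..c} \<Longrightarrow> y \<in> {a..c} \<Longrightarrow>
      f x + f y + C \<ge> f \<lceil>real_of_int (x + y) / 2\<rceil> + f \<lfloor>real_of_int (x + y) / 2\<rfloor>"
    and ap: "a < p" and pc: "p < c" and fa: "f a < v" and fc: "f c \<le> v" and C0: "C \<ge> 0"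
  shows "f p < v + C"
proof (rule ccontr)
  assume "\<not> f p < v + C"
  hence fp: "f p \<ge> v + C" by simp
  define S where "S = {a..c}"
  have finS: "finite S" and pS: "p \<in> S" using ap pc by (auto simp: S_def)
  define M where "M = Max (f ` S)"
  have leM: "\<And>z. z \<in> S \<Longrightarrow> f z \<le> M" using finS by (auto simp: M_def)
  have "M \<in> f ` S" unfolding M_def using finS pS by (intro Max_in) auto
  define A where "A = {q \<in> S. f q = M}"
  have finA: "finite A" using finS by (auto simp: A_def)
  have neA: "A \<noteq> {}" using \<open>M \<in> f ` S\<close> by (auto simp: A_def)
  define q where "q = Min A"
  have qA: "q \<in> A" unfolding q_def using finA neA by (rule Min_in)
  have qS: "q \<in> S" and fq: "f q = M" using qA by (auto simp: A_def)
  have left: "\<And>z. z \<in> S \<Longrightarrow> z < q \<Longrightarrow> f z < M"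
  proof -
    fix z assume "z \<in> S" "z < q"
    show "f z < M"
    proof (rule ccontr)
      assume "\<not> f z < M"
      with leM[OF \<open>z \<in> S\<close>] have "z \<in> A" using \<open>z \<in> S\<close> by (auto simp: A_def)
      hence "q \<le> z" unfolding q_def using finA by simp
      with \<open>z < q\<close> show False by simp
    qed
  qed
  have Mge: "M \<ge> v + C" using leM[OF pS] fp by simp
  have qa: "q \<noteq> a" using fq fa Mge C0 by auto
  have qc: "q \<noteq> c"
  proof
    assume "q = c"
    hence "M \<le> v" using fq fc by simp
    hence "f p \<ge> M" using fp C0 by simp
    moreover have "f p < M" using left[OF pS] pc \<open>q = c\<close> by simp
    ultimately show False by simp
  qed
  have aq: "a < q" and qc': "q < c" using qS qa qc by (auto simp: S_def)
  show False
  proof (cases "2 * q - a \<le> c")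
    case True
    define y where "y = 2 * q - a"
    have yS: "y \<in> S" using True aq by (auto simp: S_def y_def)
    have "f a + f y + C \<ge> f q + f q"
      using am[of a y] yS mid_eq[of a y q] aq by (auto simp: S_def y_def)
    moreover have "f y \<le> M" using leM yS by simp
    ultimately show False using fq fa Mge by linarith
  next
    case False
    define x where "x = 2 * q - c"
    have xS: "x \<in> S" using False qc' by (auto simp: S_def x_def)
    have "x < q" using qc' by (simp add: x_def)
    have "f x + f c + C \<ge> f q + f q"
      using am[of x c] xS mid_eq[of x c q] qc' by (auto simp: S_def x_def)
    moreover have "f x < M" using left xS \<open>x < q\<close> by simp
    ultimately show False using fq fc Mge by linarith
  qed
qed

theorem theorem2:
  fixes xs xt x0 b :: int and C :: real and f :: "int \<Rightarrow> real"
  assumes "xs < xt"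
    and "C \<ge> 0"
    and "ameso_pair {xs..xt} f C"
    and "x0 \<in> {xs..xt}"
    and "b > 0"
    and "{x0 - b..x0} \<subseteq> {xs..xt}"
    and "f x0 = Min (f ` {x0 - b..xt})"
    and "f x0 + C \<le> Max (f ` {x0 - b..x0})"
  shows "f x0 = Min (f ` {xs..xt})"
proof -
  have am: "\<And>x y. x \<in> {xs..xt} \<Longrightarrow> y \<in> {xs..xt} \<Longrightarrow>
      f x + f y + C \<ge> f \<lceil>real_of_int (x + y) / 2\<rceil> + f \<lfloor>real_of_int (x + y) / 2\<rfloor>"
    using assms(3) unfolding ameso_pair_def by blast
  have rmin: "\<And>z. z \<in> {x0 - b..xt} \<Longrightarrow> f x0 \<le> f z"
    using assms(7) by (metis Min_le finite_atLeastAtMost finite_imageI image_eqI)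
  have "Max (f ` {x0 - b..x0}) \<in> f ` {x0 - b..x0}"
    using assms(5) by (intro Max_in) auto
  then obtain m where m: "m \<in> {x0 - b..x0}" "f m = Max (f ` {x0 - b..x0})" by auto
  obtain p where p: "p \<in> {x0 - b..x0 - 1}" "f p \<ge> f x0 + C"
  proof (cases "m = x0")
    case True
    hence "C \<le> 0" using m assms(8) by simp
    hence "C = 0" using assms(2) by simp
    moreover have "f x0 \<le> f (x0 - 1)" using rmin assms(5,4) by auto
    ultimately show ?thesis using that[of "x0 - 1"] assms(5) by auto
  next
    case False
    then show ?thesis using that[of m] m assms(8) by auto
  qed
  have allge: "\<forall>z\<in>{xs..xt}. f x0 \<le> f z"
  proof
    fix z assume z: "z \<in> {xs..xt}"
    show "f x0 \<le> f z"
    proof (cases "z \<ge> x0 - b")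
      case True
      then show ?thesis using rmin z by auto
    next
      case False
      show ?thesis
      proof (rule ccontr)
        assume "\<not> f x0 \<le> f z"
        hence fz: "f z < f x0" by simp
        have sub: "{z..x0} \<subseteq> {xs..xt}" using z assms(4) by auto
        have "f p < f x0 + C"
          by (rule keyB[where a=z and c=x0]) (use am sub p False fz assms(2) in auto)
        with p show False by simp
      qed
    qed
  qed
  show ?thesis
    by (rule sym, rule Min_eqI) (use allge assms(4) in auto)
qed

end
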